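(* Let $q(\mathbf{y},\mathbf{x})$ be a joint distribution of a label $\mathbf{y}$ and inputs $\mathbf{x}\in\mathbb{R}^d$ with finite entropies $\mathbf{H}_q(\mathbf{y}\mid\mathbf{x})$ and $\mathbf{H}_q(\mathbf{y})$. For any explanation $e$ that is encoding and any explanation $e'$ that is not encoding, there exists $\alpha^*$ such that for all $\alpha>\alpha^*$, $\mathrm{STRIPE\text{-}X}_\alpha(q,e')>\mathrm{STRIPE\text{-}X}_\alpha(q,e)$.
   Context: An explanation (method) is a map $e:\mathbb{R}^d\to\{0,1\}^d$. For $\mathbf{v}\in\{0,1\}^d$, $\mathbf{x}_{\mathbf{v}}$ denotes the values of the coordinates selected by $\mathbf{v}$. The explanation is the random pair $\mathbf{x}_{e(\mathbf{x})}=(e(\mathbf{x}),\mathbf{x}_{e(\mathbf{x})})$, written $(\mathbf{v},\mathbf{a})$. The explanation indicator is $\mathbf{E}_{\mathbf{v}}=\mathbb{1}[e(\mathbf{x})=\mathbf{v}]$. Regular conditional distributions are assumed to exist. $e$ is encoding if there is a set $\mathbf{S}$ with $q(\mathbf{x}_{e(\mathbf{x})}\in\mathbf{S})>0$ such that for every $(\mathbf{v},\mathbf{a})\in\mathbf{S}$, $\mathbf{y}$ is not conditionally independent of $\mathbf{E}_{\mathbf{v}}$ given $\mathbf{x}_{\mathbf{v}}=\mathbf{a}$; otherwise it is non-encoding. Define $\mathrm{EVAL\text{-}X}(q,e)=\mathbb{E}_{(\mathbf{v},\mathbf{a})\sim q(\mathbf{x}_{e(\mathbf{x})})}\mathbb{E}_{\mathbf{y}\sim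 q(\mathbf{y}\mid \mathbf{x}_{e(\mathbf{x})}=(\mathbf{v},\mathbf{a}))}[\log q(\mathbf{y}\mid \mathbf{x}_{\mathbf{v}}=\mathbf{a})]$, the ENCODE-METER $\phi_q(e)=\mathbb{E}_{(\mathbf{v},\mathbf{a})\sim q(\mathbf{x}_{e(\mathbf{x})})}\mathbf{I}(\mathbf{E}_{\mathbf{v}};\mathbf{y}\mid \mathbf{x}_{\mathbf{v}}=\mathbf{a})$ (instantaneous conditional mutual information, i.e. mutual information between $\mathbf{E}_{\mathbf{v}}$ and $\mathbf{y}$ under the conditional distribution given $\mathbf{x}_{\mathbf{v}}=\mathbf{a}$), and $\mathrm{STRIPE\text{-}X}_\alpha(q,e)=\mathrm{EVAL\text{-}X}(q,e)-\alpha\,\phi_q(e)$. *)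

theory Defs
  imports "HOL-Probability.Probability"
begin

text \<open>Inputs live in \<open>real^'d\<close> (d = CARD('d)); a selection vector v in {0,1}^d is a subset of 'd;
  the label y ranges over a countable type 'y.\<close>

definition joint_space :: "('y::countable \<times> (real^'d)) measure" where
  "joint_space = count_space UNIV \<Otimes>\<^sub>M borel"

definition expl_space :: "('d set \<times> (real^'d)) measure" where
  "expl_space = count_space UNIV \<Otimes>\<^sub>M borel"

definition restr :: "'d set \<Rightarrow> real^'d \<Rightarrow> real^'d" where
  "restr v x = (\<chi> i. if i \<in> v then x $ i else 0)"

definition expl :: "(real^'d \<Rightarrow> 'd set) \<Rightarrow> real^'d \<Rightarrow> 'd set \<times> (real^'d)" where
  "expl e x = (e x, restr (e x) x)"

definition expl_law :: "('y \<times> (real^'d)) measure \<Rightarrow> (real^'d \<Rightarrow> 'd set) \<Rightarrow> ('d set \<times> (real^'d)) measure" where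
  "expl_law q e = distr q expl_space (\<lambda>z. expl e (snd z))"

text \<open>K is a family of regular conditional distributions of (y,x) given x_v:
  for each v, K v a is the conditional law of (y,x) given x_v = a.\<close>
definition is_rcd :: "('y::countable \<times> (real^'d)) measure \<Rightarrow> ('d set \<Rightarrow> real^'d \<Rightarrow> ('y \<times> (real^'d)) measure) \<Rightarrow> bool" where
  "is_rcd q K \<longleftrightarrow> (\<forall>v.
     K v \<in> borel \<rightarrow>\<^sub>M prob_algebra joint_space \<and>
     (\<forall>A\<in>sets joint_space. \<forall>B\<in>sets borel.
        emeasure q (A \<inter> {z. restr v (snd z) \<in> B})
        = (\<integral>\<^sup>+ z. indicator B (restr v (snd z)) * emeasure (K v (restr v (snd z))) A \<partial>q)))"

definition E_ind :: "(real^'d \<Rightarrow> 'd set) \<Rightarrow> 'd set \<Rightarrow> 'y \<times> (real^'d) \<Rightarrow> bool" where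
  "E_ind e v z = (e (snd z) = v)"

definition cond_y :: "('d set \<Rightarrow> real^'d \<Rightarrow> ('y \<times> (real^'d)) measure) \<Rightarrow> 'd set \<Rightarrow> real^'d \<Rightarrow> 'y \<Rightarrow> real" where
  "cond_y K v a y = measure (K v a) ({y} \<times> UNIV)"

text \<open>Inner expectation of EVAL-X: E_{y ~ q(y | x_{e(x)} = (v,a))} log q(y | x_v = a),
  where q(y | x_{e(x)} = (v,a)) = q(y | E_v = 1, x_v = a).\<close>
definition eval_inner :: "('d set \<Rightarrow> real^'d \<Rightarrow> ('y \<times> (real^'d)) measure) \<Rightarrow> (real^'d \<Rightarrow> 'd set)
    \<Rightarrow> 'd set \<Rightarrow> real^'d \<Rightarrow> real" where
  "eval_inner K e v a =
     (\<integral> z. indicator {z. E_ind e v z} z * ln (cond_y K v a (fst z)) \<partial>K v a)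
       / measure (K v a) {z. E_ind e v z}"

definition EVAL_X :: "('y \<times> (real^'d)) measure \<Rightarrow> ('d set \<Rightarrow> real^'d \<Rightarrow> ('y \<times> (real^'d)) measure)
    \<Rightarrow> (real^'d \<Rightarrow> 'd set) \<Rightarrow> real" where
  "EVAL_X q K e = (\<integral> p. eval_inner K e (fst p) (snd p) \<partial>expl_law q e)"

definition inst_cmi :: "('d set \<Rightarrow> real^'d \<Rightarrow> ('y::countable \<times> (real^'d)) measure) \<Rightarrow> (real^'d \<Rightarrow> 'd set)
    \<Rightarrow> 'd set \<Rightarrow> real^'d \<Rightarrow> real" where
  "inst_cmi K e v a = prob_space.mutual_information (K v a) (exp 1)
     (count_space UNIV) (count_space UNIV) (E_ind e v) fst"

definition encode_meter :: "('y::countable \<times> (real^'d)) measure \<Rightarrow> ('d set \<Rightarrow> real^'d \<Rightarrow> ('y \<times> (real^'d)) measure)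
    \<Rightarrow> (real^'d \<Rightarrow> 'd set) \<Rightarrow> real" where
  "encode_meter q K e = (\<integral> p. inst_cmi K e (fst p) (snd p) \<partial>expl_law q e)"

definition STRIPE_X :: "real \<Rightarrow> ('y::countable \<times> (real^'d)) measure \<Rightarrow> ('d set \<Rightarrow> real^'d \<Rightarrow> ('y \<times> (real^'d)) measure)
    \<Rightarrow> (real^'d \<Rightarrow> 'd set) \<Rightarrow> real" where
  "STRIPE_X \<alpha> q K e = EVAL_X q K e - \<alpha> * encode_meter q K e"

text \<open>(indep_var requires both variables to share a codomain, so E_v and y are
  injected into bool + 'y; this does not change the independence notion.)
  e is encoding: some measurable S with positive probability under the law of x_{e(x)}
  such that for every (v,a) in S, y is not independent of E_v given x_v = a.\<close>
definition encoding :: "('y::countable \<times> (real^'d)) measure \<Rightarrow> ('d set \<Rightarrow> real^'d \<Rightarrow> ('y \<times> (real^'d)) measure)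
    \<Rightarrow> (real^'d \<Rightarrow> 'd set) \<Rightarrow> bool" where
  "encoding q K e \<longleftrightarrow> (\<exists>S\<in>sets expl_space. measure (expl_law q e) S > 0 \<and>
     (\<forall>(v,a)\<in>S. \<not> prob_space.indep_var (K v a)
        (count_space UNIV) (\<lambda>z. Inl (E_ind e v z) :: bool + 'y)
        (count_space UNIV) (\<lambda>z. Inr (fst z) :: bool + 'y)))"

text \<open>Finite entropies: H_q(y) = -E log q(y) and H_q(y|x) = -E log q(y|x) are finite
  (the integrands are nonnegative, so finiteness = integrability).\<close>
definition finite_H_y :: "('y::countable \<times> (real^'d)) measure \<Rightarrow> bool" where
  "finite_H_y q \<longleftrightarrow> integrable q (\<lambda>z. ln (measure q ({fst z} \<times> UNIV)))"

definition finite_H_y_given_x :: "('y::countable \<times> (real^'d)) measure \<Rightarrow> ('d set \<Rightarrow> real^'d \<Rightarrow> ('y \<times> (real^'d)) measure) \<Rightarrow> bool" where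
  "finite_H_y_given_x q K \<longleftrightarrow> integrable q (\<lambda>z. ln (cond_y K UNIV (snd z) (fst z)))"

end

theory Submission
  imports Defs
begin


lemma gibbs_lower:
  fixes p r :: real
  assumes "0 \<le> p" "0 \<le> r" "p > 0 \<Longrightarrow> r > 0"
  shows "p - r \<le> p * ln (p / r)"
proof (cases "p = 0")
  case True then show ?thesis using assms by simp
next
  case False
  then have p: "p > 0" and r: "r > 0" using assms by auto
  have "ln (r / p) \<le> r / p - 1" using p r by (intro ln_le_minus_one) auto
  moreover have "ln (p / r) = - ln (r / p)" using p r by (simp add: ln_div)
  ultimately have "1 - r / p \<le> ln (p / r)" by simp
  then have "p * (1 - r / p) \<le> p * ln (p / r)" using p by (intro mult_left_mono) auto
  moreover have "p * (1 - r / p) = p - r" using p by (simp add: field_simps)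
  ultimately show ?thesis by simp
qed

lemma gibbs_eq:
  fixes p r :: real
  assumes "0 \<le> p" "0 \<le> r" "p > 0 \<Longrightarrow> r > 0" and eq: "p * ln (p / r) = p - r"
  shows "p = r"
proof (cases "p = 0")
  case True then show ?thesis using eq by simp
next
  case False
  then have p: "p > 0" and r: "r > 0" using assms by auto
  have "ln (p / r) = 1 - r / p" using eq p by (simp add: field_simps)
  moreover have "ln (p / r) = - ln (r / p)" using p r by (simp add: ln_div)
  ultimately have "ln (r / p) = r / p - 1" by simp
  then have "r / p = 1" using p r by (intro ln_eq_minus_one) auto
  then show ?thesis using p by (simp add: field_simps)
qed

lemma upper_bd:
  fixes p a c :: real
  assumes "0 \<le> p" "p \<le> a" "p \<le> c"
  shows "p * ln (p / (a * c)) \<le> p * (- ln a)"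
proof (cases "p = 0")
  case True then show ?thesis by simp
next
  case False
  then have p: "p > 0" and a: "a > 0" and c: "c > 0" using assms by auto
  have "p / (a * c) \<le> 1 / a" using p a c assms(3) by (simp add: field_simps)
  then have "ln (p / (a * c)) \<le> ln (1 / a)" using p a c by (intro ln_mono) auto
  also have "ln (1 / a) = - ln a" using a by (simp add: ln_div)
  finally show ?thesis using p by (intro mult_left_mono) auto
qed

lemma ent_le_1:
  fixes p :: real
  assumes "0 \<le> p" "p \<le> 1"
  shows "- ln p * p \<le> 1" "0 \<le> - ln p * p"
proof -
  show "- ln p * p \<le> 1"
  proof (cases "p = 0")
    case False
    then have p: "p > 0" using assms by auto
    have "ln (1/p) \<le> 1/p - 1" using p by (intro ln_le_minus_one) auto
    then have "- ln p \<le> 1/p - 1" using p by (simp add: ln_div)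
    then have "- ln p * p \<le> (1/p - 1) * p" using p by (intro mult_right_mono) auto
    also have "\<dots> = 1 - p" using p by (simp add: field_simps)
    finally show ?thesis using p by simp
  qed simp
  show "0 \<le> - ln p * p"
  proof (cases "p = 0")
    case False
    then have "ln p \<le> 0" using assms by simp
    then show ?thesis using assms by (simp add: mult_nonpos_nonneg)
  qed simp
qed


definition pz :: "'a measure \<Rightarrow> ('a \<Rightarrow> 'z) \<Rightarrow> 'z \<Rightarrow> real" where
  "pz M Z z = measure M {x\<in>space M. Z x = z}"

lemma (in prob_space) distributed_countable:
  fixes Z :: "'a \<Rightarrow> 'z::countable"
  assumes Z[measurable]: "Z \<in> M \<rightarrow>\<^sub>M count_space UNIV"
  shows "distributed M (count_space UNIV) Z (\<lambda>z. ennreal (pz M Z z))"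
  unfolding distributed_def
proof (intro conjI)
  show "distr M (count_space UNIV) Z = density (count_space UNIV) (\<lambda>z. ennreal (pz M Z z))"
  proof (rule measure_eqI_countable[where A=UNIV])
    fix a :: 'z
    have "emeasure (distr M (count_space UNIV) Z) {a} = emeasure M {x\<in>space M. Z x = a}"
      by (subst emeasure_distr) (auto intro!: arg_cong[where f="emeasure M"])
    also have "\<dots> = ennreal (pz M Z a)"
      unfolding pz_def by (simp add: emeasure_eq_measure)
    also have "\<dots> = emeasure (density (count_space UNIV) (\<lambda>z. ennreal (pz M Z z))) {a}"
      by (simp add: emeasure_density nn_integral_count_space_indicator)
    finally show "emeasure (distr M (count_space UNIV) Z) {a} = emeasure (density (count_space UNIV) (\<lambda>z. ennreal (pz M Z z))) {a}" .
  qed auto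
qed auto


lemma (in prob_space) marg_sum:
  fixes Z :: "'a \<Rightarrow> 'z::countable" and P :: "'a \<Rightarrow> bool"
  assumes Z[measurable]: "Z \<in> M \<rightarrow>\<^sub>M count_space UNIV"
  assumes P[measurable]: "Measurable.pred M P"
  shows "ennreal (measure M {x\<in>space M. P x}) = (\<integral>\<^sup>+ z. ennreal (measure M {x\<in>space M. P x \<and> Z x = z}) \<partial>count_space UNIV)"
proof -
  have "measure M {x\<in>space M. P x} = measure M {x\<in>space M. \<exists>z\<in>UNIV. P x \<and> Z x = z}"
    by simp
  also have "ennreal \<dots> = (\<integral>\<^sup>+ z. ennreal (measure M {x\<in>space M. P x \<and> Z x = z}) \<partial>count_space UNIV)"
    by (rule prob_EX_countable) auto
  finally show ?thesis .
qed


lemma count_pair_UNIV: "(count_space UNIV \<Otimes>\<^sub>M count_space UNIV :: ('b::countable \<times> 'c::countable) measure) = count_space UNIV"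
  by (subst pair_measure_countable) auto

context prob_space
begin

lemma pz_nonneg: "0 \<le> pz M Z z" unfolding pz_def by simp
lemma pz_le1: "pz M Z z \<le> 1" unfolding pz_def by simp

lemma indep_iff_factor:
  fixes X :: "'a \<Rightarrow> 'b::countable" and Y :: "'a \<Rightarrow> 'b"
  assumes X[measurable]: "X \<in> M \<rightarrow>\<^sub>M count_space UNIV" and Y[measurable]: "Y \<in> M \<rightarrow>\<^sub>M count_space UNIV"
  shows "indep_var (count_space UNIV) X (count_space UNIV) Y \<longleftrightarrow>
    (\<forall>w. pz M (\<lambda>x. (X x, Y x)) w = pz M X (fst w) * pz M Y (snd w))"
proof -
  interpret PX: prob_space "distr M (count_space UNIV) X" by (rule prob_space_distr) simp
  interpret PY: prob_space "distr M (count_space UNIV) Y" by (rule prob_space_distr) simp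
  interpret PXY: pair_prob_space "distr M (count_space UNIV) X" "distr M (count_space UNIV) Y" ..
  have XY[measurable]: "(\<lambda>x. (X x, Y x)) \<in> M \<rightarrow>\<^sub>M count_space UNIV \<Otimes>\<^sub>M count_space UNIV"
    by measurable
  have e1: "emeasure (distr M (count_space UNIV) X \<Otimes>\<^sub>M distr M (count_space UNIV) Y) {w}
      = ennreal (pz M X (fst w) * pz M Y (snd w))" for w
  proof -
    obtain b y where w: "w = (b, y)" by (cases w)
    have "{w} = {b} \<times> {y}" using w by auto
    then have "emeasure (distr M (count_space UNIV) X \<Otimes>\<^sub>M distr M (count_space UNIV) Y) {w}
       = emeasure (distr M (count_space UNIV) X) {b} * emeasure (distr M (count_space UNIV) Y) {y}"
      using PY.emeasure_pair_measure_Times[where N="distr M (count_space UNIV) X" and A="{b}" and B="{y}"] w by simp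
    also have "\<dots> = ennreal (pz M X b) * ennreal (pz M Y y)"
      by (simp add: emeasure_distr pz_def emeasure_eq_measure vimage_def Int_def conj_commute)
    also have "\<dots> = ennreal (pz M X (fst w) * pz M Y (snd w))"
      using w by (simp add: ennreal_mult pz_nonneg)
    finally show ?thesis .
  qed
  have e2: "emeasure (distr M (count_space UNIV \<Otimes>\<^sub>M count_space UNIV) (\<lambda>x. (X x, Y x))) {w}
      = ennreal (pz M (\<lambda>x. (X x, Y x)) w)" for w
    unfolding count_pair_UNIV
    by (subst emeasure_distr) (auto simp: pz_def emeasure_eq_measure vimage_def Int_def conj_commute)
  have sets1: "sets (distr M (count_space UNIV) X \<Otimes>\<^sub>M distr M (count_space UNIV) Y) = Pow UNIV"
  proof -
    have "sets (distr M (count_space UNIV) X \<Otimes>\<^sub>M distr M (count_space UNIV) Y)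
        = sets (count_space UNIV \<Otimes>\<^sub>M count_space UNIV :: ('b \<times> 'b) measure)"
      by (intro sets_pair_measure_cong) auto
    also have "\<dots> = sets (count_space UNIV :: ('b \<times> 'b) measure)" by (simp only: count_pair_UNIV)
    finally show ?thesis by simp
  qed
  have sets2: "sets (distr M (count_space UNIV \<Otimes>\<^sub>M count_space UNIV) (\<lambda>x. (X x, Y x))) = Pow UNIV"
    by (simp only: count_pair_UNIV sets_distr) simp
  have "indep_var (count_space UNIV) X (count_space UNIV) Y \<longleftrightarrow>
     distr M (count_space UNIV) X \<Otimes>\<^sub>M distr M (count_space UNIV) Y = distr M (count_space UNIV \<Otimes>\<^sub>M count_space UNIV) (\<lambda>x. (X x, Y x))"
    by (simp add: indep_var_distribution_eq)
  also have "\<dots> \<longleftrightarrow> (\<forall>w. pz M (\<lambda>x. (X x, Y x)) w = pz M X (fst w) * pz M Y (snd w))"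
  proof
    assume eq: "distr M (count_space UNIV) X \<Otimes>\<^sub>M distr M (count_space UNIV) Y = distr M (count_space UNIV \<Otimes>\<^sub>M count_space UNIV) (\<lambda>x. (X x, Y x))"
    show "\<forall>w. pz M (\<lambda>x. (X x, Y x)) w = pz M X (fst w) * pz M Y (snd w)"
    proof
      fix w
      have "ennreal (pz M (\<lambda>x. (X x, Y x)) w) = ennreal (pz M X (fst w) * pz M Y (snd w))"
        using e1[of w] e2[of w] eq by simp
      then show "pz M (\<lambda>x. (X x, Y x)) w = pz M X (fst w) * pz M Y (snd w)"
        by (subst (asm) ennreal_inj) (auto simp: pz_nonneg)
    qed
  next
    assume fac: "\<forall>w. pz M (\<lambda>x. (X x, Y x)) w = pz M X (fst w) * pz M Y (snd w)"
    show "distr M (count_space UNIV) X \<Otimes>\<^sub>M distr M (count_space UNIV) Y = distr M (count_space UNIV \<Otimes>\<^sub>M count_space UNIV) (\<lambda>x. (X x, Y x))"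
      by (rule measure_eqI_countable[OF sets1 sets2]) (auto simp: e1 e2 fac)
  qed
  finally show ?thesis .
qed

lemma indep_inj_iff:
  fixes X :: "'a \<Rightarrow> 'b::countable" and Y :: "'a \<Rightarrow> 'c::countable"
  assumes X[measurable]: "X \<in> M \<rightarrow>\<^sub>M count_space UNIV" and Y[measurable]: "Y \<in> M \<rightarrow>\<^sub>M count_space UNIV"
  shows "indep_var (count_space UNIV) (\<lambda>z. Inl (X z) :: 'b + 'c) (count_space UNIV) (\<lambda>z. Inr (Y z) :: 'b + 'c) \<longleftrightarrow>
    (\<forall>w. pz M (\<lambda>x. (X x, Y x)) w = pz M X (fst w) * pz M Y (snd w))"
proof -
  have [measurable]: "(\<lambda>z. Inl (X z) :: 'b + 'c) \<in> M \<rightarrow>\<^sub>M count_space UNIV"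
    by (rule measurable_compose[OF X]) simp
  have [measurable]: "(\<lambda>z. Inr (Y z) :: 'b + 'c) \<in> M \<rightarrow>\<^sub>M count_space UNIV"
    by (rule measurable_compose[OF Y]) simp
  have "indep_var (count_space UNIV) (\<lambda>z. Inl (X z) :: 'b + 'c) (count_space UNIV) (\<lambda>z. Inr (Y z) :: 'b + 'c) \<longleftrightarrow>
    (\<forall>w. pz M (\<lambda>x. (Inl (X x) :: 'b + 'c, Inr (Y x) :: 'b + 'c)) w = pz M (\<lambda>z. Inl (X z) :: 'b + 'c) (fst w) * pz M (\<lambda>z. Inr (Y z) :: 'b + 'c) (snd w))"
    by (rule indep_iff_factor) measurable
  also have "\<dots> \<longleftrightarrow> (\<forall>w. pz M (\<lambda>x. (X x, Y x)) w = pz M X (fst w) * pz M Y (snd w))"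
  proof safe
    fix b y
    assume "\<forall>w. pz M (\<lambda>x. (Inl (X x) :: 'b + 'c, Inr (Y x) :: 'b + 'c)) w = pz M (\<lambda>z. Inl (X z) :: 'b + 'c) (fst w) * pz M (\<lambda>z. Inr (Y z) :: 'b + 'c) (snd w)"
    from this[rule_format, of "(Inl b, Inr y)"]
    show "pz M (\<lambda>x. (X x, Y x)) (b, y) = pz M X (fst (b, y)) * pz M Y (snd (b, y))"
      by (simp add: pz_def)
  next
    fix s t :: "'b + 'c"
    assume fac: "\<forall>w. pz M (\<lambda>x. (X x, Y x)) w = pz M X (fst w) * pz M Y (snd w)"
    show "pz M (\<lambda>x. (Inl (X x) :: 'b + 'c, Inr (Y x) :: 'b + 'c)) (s, t) = pz M (\<lambda>z. Inl (X z) :: 'b + 'c) (fst (s, t)) * pz M (\<lambda>z. Inr (Y z) :: 'b + 'c) (snd (s, t))"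
    proof (cases s; cases t)
      fix b y assume "s = Inl b" "t = Inr y"
      then show ?thesis using fac[rule_format, of "(b, y)"] by (simp add: pz_def)
    qed (auto simp: pz_def)
  qed
  finally show ?thesis .
qed

end


definition mif :: "'a measure \<Rightarrow> ('a \<Rightarrow> 'b) \<Rightarrow> ('a \<Rightarrow> 'c) \<Rightarrow> 'b \<times> 'c \<Rightarrow> real" where
  "mif M X Y w = pz M (\<lambda>x. (X x, Y x)) w * ln (pz M (\<lambda>x. (X x, Y x)) w / (pz M X (fst w) * pz M Y (snd w)))"

context prob_space
begin

lemma MI_props:
  fixes X :: "'a \<Rightarrow> 'b::finite" and Y :: "'a \<Rightarrow> 'c::countable"
  assumes X[measurable]: "X \<in> M \<rightarrow>\<^sub>M count_space UNIV" and Y[measurable]: "Y \<in> M \<rightarrow>\<^sub>M count_space UNIV"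
  shows "mutual_information (exp 1) (count_space UNIV) (count_space UNIV) X Y = (\<integral>w. mif M X Y w \<partial>count_space UNIV)"
    and "0 \<le> mutual_information (exp 1) (count_space UNIV) (count_space UNIV) X Y"
    and "mutual_information (exp 1) (count_space UNIV) (count_space UNIV) X Y \<le> real CARD('b)"
    and "mutual_information (exp 1) (count_space UNIV) (count_space UNIV) X Y = 0 \<longleftrightarrow>
         (\<forall>w. pz M (\<lambda>x. (X x, Y x)) w = pz M X (fst w) * pz M Y (snd w))"
proof -
  define px where "px = pz M X"
  define py where "py = pz M Y"
  define pj where "pj = pz M (\<lambda>x. (X x, Y x))"
  define r where "r = (\<lambda>w. px (fst w) * py (snd w))"
  define u where "u = (\<lambda>w. pj w * (- ln (px (fst w))))"
  define f where "f = mif M X Y"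
  have f_def': "f w = pj w * ln (pj w / r w)" for w
    unfolding f_def mif_def pj_def r_def px_def py_def by simp
  have nn: "0 \<le> px b" "0 \<le> py y" "0 \<le> pj w" "px b \<le> 1" "py y \<le> 1" for b y w
    unfolding px_def py_def pj_def by (auto simp: pz_nonneg pz_le1)
  have le1: "pj (b, y) \<le> px b" for b y
    unfolding pj_def px_def pz_def by (rule finite_measure_mono) auto
  have le2: "pj (b, y) \<le> py y" for b y
    unfolding pj_def py_def pz_def by (rule finite_measure_mono) auto
  have pos: "pj w > 0 \<Longrightarrow> r w > 0" for w
  proof -
    assume "pj w > 0"
    moreover obtain b y where w: "w = (b, y)" by (cases w)
    ultimately have "px b > 0" "py y > 0" using le1[of b y] le2[of b y] by auto
    then show "r w > 0" using w unfolding r_def by simp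
  qed
  have r_nn: "0 \<le> r w" for w unfolding r_def using nn by simp
  have u_nn: "0 \<le> u w" for w
  proof -
    have "ln (px (fst w)) \<le> 0" using nn(1,4)[of "fst w"] by (cases "px (fst w) = 0") auto
    then show ?thesis unfolding u_def using nn by (simp add: mult_nonneg_nonpos)
  qed
  have f_lower: "pj w - r w \<le> f w" for w
    unfolding f_def' using nn r_nn pos by (intro gibbs_lower) auto
  have f_upper: "f w \<le> u w" for w
  proof -
    obtain b y where w: "w = (b, y)" by (cases w)
    have "pj (b, y) * ln (pj (b, y) / (px b * py y)) \<le> pj (b, y) * (- ln (px b))"
      using nn(3) le1 le2 by (rule upper_bd)
    then show ?thesis unfolding f_def' u_def r_def using w by simp
  qed
  have m1: "ennreal (px b) = (\<integral>\<^sup>+ y. ennreal (pj (b, y)) \<partial>count_space UNIV)" for b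
    using marg_sum[OF Y, of "\<lambda>x. X x = b"] unfolding px_def pj_def pz_def by simp
  have m2: "(\<integral>\<^sup>+ y. ennreal (py y) \<partial>count_space UNIV) = 1"
    using marg_sum[OF Y, of "\<lambda>x. True"] unfolding py_def pz_def by (simp add: prob_space)
  have m3: "(\<integral>\<^sup>+ b. ennreal (px b) \<partial>count_space UNIV) = 1"
    using marg_sum[OF X, of "\<lambda>x. True"] unfolding px_def pz_def by (simp add: prob_space)
  have i_pj: "(\<integral>\<^sup>+ w. ennreal (pj w) \<partial>count_space UNIV) = 1"
    by (subst nn_integral_fst_count_space[symmetric]) (simp add: m1[symmetric] m3)
  have i_r: "(\<integral>\<^sup>+ w. ennreal (r w) \<partial>count_space UNIV) = 1"
  proof -
    have "(\<integral>\<^sup>+ w. ennreal (r w) \<partial>count_space UNIV) = (\<integral>\<^sup>+ b. \<integral>\<^sup>+ y. ennreal (px b) * ennreal (py y) \<partial>count_space UNIV \<partial>count_space UNIV)"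
      by (subst nn_integral_fst_count_space[symmetric]) (simp add: r_def ennreal_mult nn)
    also have "\<dots> = (\<integral>\<^sup>+ b. ennreal (px b) \<partial>count_space UNIV)"
      by (simp add: nn_integral_cmult m2)
    finally show ?thesis using m3 by simp
  qed
  have i_u: "(\<integral>\<^sup>+ w. ennreal (u w) \<partial>count_space UNIV) = ennreal (\<Sum>b\<in>UNIV. - ln (px b) * px b)"
  proof -
    have "(\<integral>\<^sup>+ w. ennreal (u w) \<partial>count_space UNIV) = (\<integral>\<^sup>+ b. \<integral>\<^sup>+ y. ennreal (- ln (px b)) * ennreal (pj (b, y)) \<partial>count_space UNIV \<partial>count_space UNIV)"
    proof (subst nn_integral_fst_count_space[symmetric], intro nn_integral_cong)
      fix b y
      have "0 \<le> - ln (px b)" using nn(1,4)[of b] by (cases "px b = 0") auto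
      then show "ennreal (u (b, y)) = ennreal (- ln (px b)) * ennreal (pj (b, y))"
        unfolding u_def using nn by (simp add: ennreal_mult[symmetric] mult.commute)
    qed
    also have "\<dots> = (\<integral>\<^sup>+ b. ennreal (- ln (px b)) * ennreal (px b) \<partial>count_space UNIV)"
      by (simp add: nn_integral_cmult m1)
    also have "\<dots> = (\<Sum>b\<in>UNIV. ennreal (- ln (px b) * px b))"
    proof (subst nn_integral_count_space_finite, simp, intro sum.cong refl)
      fix b
      have "0 \<le> - ln (px b)" using nn(1,4)[of b] by (cases "px b = 0") auto
      then show "ennreal (- ln (px b)) * ennreal (px b) = ennreal (- ln (px b) * px b)"
        using nn(1)[of b] by (simp only: ennreal_mult)
    qed
    also have "\<dots> = ennreal (\<Sum>b\<in>UNIV. - ln (px b) * px b)"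
      using ent_le_1(2) nn by (intro sum_ennreal) auto
    finally show ?thesis .
  qed
  have int_pj: "integrable (count_space UNIV) pj"
    by (rule integrableI_nonneg) (auto simp: nn i_pj)
  have int_r: "integrable (count_space UNIV) r"
    by (rule integrableI_nonneg) (auto simp: r_nn i_r)
  have int_u: "integrable (count_space UNIV) u"
    by (rule integrableI_nonneg) (auto simp: u_nn i_u)
  have I_pj: "(\<integral>w. pj w \<partial>count_space UNIV) = 1"
    by (subst integral_eq_nn_integral) (auto simp: nn i_pj)
  have I_r: "(\<integral>w. r w \<partial>count_space UNIV) = 1"
    by (subst integral_eq_nn_integral) (auto simp: r_nn i_r)
  have I_u: "(\<integral>w. u w \<partial>count_space UNIV) = (\<Sum>b\<in>UNIV. - ln (px b) * px b)"
  proof -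
    have "0 \<le> (\<Sum>b\<in>UNIV. - ln (px b) * px b)"
      using ent_le_1(2) nn by (intro sum_nonneg) auto
    then show ?thesis by (subst integral_eq_nn_integral) (auto simp: u_nn i_u)
  qed
  have I_u_le: "(\<integral>w. u w \<partial>count_space UNIV) \<le> real CARD('b)"
  proof -
    have "(\<Sum>b\<in>UNIV. - ln (px b) * px b) \<le> (\<Sum>b\<in>(UNIV::'b set). 1)"
      using ent_le_1(1) nn by (intro sum_mono) auto
    then show ?thesis using I_u by simp
  qed
  have int_f: "integrable (count_space UNIV) f"
  proof (rule Bochner_Integration.integrable_bound)
    show "integrable (count_space UNIV) (\<lambda>w. u w + r w + pj w)"
      using int_u int_r int_pj by auto
    show "f \<in> borel_measurable (count_space UNIV)" by simp
    show "AE w in count_space UNIV. norm (f w) \<le> norm (u w + r w + pj w)"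
    proof (simp add: AE_count_space, intro allI)
      fix w
      show "\<bar>f w\<bar> \<le> \<bar>u w + r w + pj w\<bar>"
        using f_lower[of w] f_upper[of w] u_nn[of w] r_nn[of w] nn(3)[of w] by linarith
    qed
  qed
  interpret information_space M "exp 1" by standard simp
  have dX: "distributed M (count_space UNIV) X (\<lambda>z. ennreal (px z))"
    unfolding px_def by (rule distributed_countable[OF X])
  have dY: "distributed M (count_space UNIV) Y (\<lambda>z. ennreal (py z))"
    unfolding py_def by (rule distributed_countable[OF Y])
  have XY: "(\<lambda>x. (X x, Y x)) \<in> M \<rightarrow>\<^sub>M count_space UNIV"
  proof -
    have "(\<lambda>x. (X x, Y x)) \<in> M \<rightarrow>\<^sub>M count_space UNIV \<Otimes>\<^sub>M count_space UNIV" by measurable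
    then show ?thesis by (simp only: count_pair_UNIV)
  qed
  have dXY: "distributed M (count_space UNIV \<Otimes>\<^sub>M count_space UNIV) (\<lambda>x. (X x, Y x)) (\<lambda>z. ennreal (pj z))"
    unfolding pj_def count_pair_UNIV by (rule distributed_countable[OF XY])
  have MI: "mutual_information (exp 1) (count_space UNIV) (count_space UNIV) X Y = (\<integral>w. f w \<partial>count_space UNIV)"
  proof -
    have "mutual_information (exp 1) (count_space UNIV) (count_space UNIV) X Y
       = (\<integral>w. pj w * log (exp 1) (pj w / (px (fst w) * py (snd w))) \<partial>(count_space UNIV \<Otimes>\<^sub>M count_space UNIV))"
      by (rule mutual_information_distr[OF _ _ dX _ dY _ dXY])
         (auto simp: nn sigma_finite_measure_count_space_countable)
    also have "\<dots> = (\<integral>w. f w \<partial>count_space UNIV)"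
      unfolding count_pair_UNIV f_def' r_def by (simp add: log_def)
    finally show ?thesis .
  qed
  show "mutual_information (exp 1) (count_space UNIV) (count_space UNIV) X Y = (\<integral>w. mif M X Y w \<partial>count_space UNIV)"
    using MI f_def by simp
  have "0 = (\<integral>w. pj w - r w \<partial>count_space UNIV)"
    using int_pj int_r I_pj I_r by simp
  also have "\<dots> \<le> (\<integral>w. f w \<partial>count_space UNIV)"
    using int_pj int_r int_f f_lower by (intro integral_mono) auto
  finally show "0 \<le> mutual_information (exp 1) (count_space UNIV) (count_space UNIV) X Y"
    using MI by simp
  have "(\<integral>w. f w \<partial>count_space UNIV) \<le> (\<integral>w. u w \<partial>count_space UNIV)"
    using int_u int_f f_upper by (intro integral_mono) auto
  then show "mutual_information (exp 1) (count_space UNIV) (count_space UNIV) X Y \<le> real CARD('b)"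
    using MI I_u_le by simp
  show "mutual_information (exp 1) (count_space UNIV) (count_space UNIV) X Y = 0 \<longleftrightarrow>
         (\<forall>w. pz M (\<lambda>x. (X x, Y x)) w = pz M X (fst w) * pz M Y (snd w))"
  proof
    assume "mutual_information (exp 1) (count_space UNIV) (count_space UNIV) X Y = 0"
    then have "(\<integral>w. f w \<partial>count_space UNIV) = 0" using MI by simp
    then have "(\<integral>w. f w - (pj w - r w) \<partial>count_space UNIV) = 0"
      using int_pj int_r int_f I_pj I_r by simp
    then have "AE w in count_space UNIV. f w - (pj w - r w) = 0"
      using int_pj int_r int_f f_lower
      by (subst integral_nonneg_eq_0_iff_AE[symmetric]) auto
    then have "\<forall>w. f w = pj w - r w" by (simp add: AE_count_space)
    then have "\<forall>w. pj w = r w"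
      using nn r_nn pos by (auto simp: f_def' intro: gibbs_eq)
    then show "\<forall>w. pz M (\<lambda>x. (X x, Y x)) w = pz M X (fst w) * pz M Y (snd w)"
      unfolding pj_def r_def px_def py_def .
  next
    assume "\<forall>w. pz M (\<lambda>x. (X x, Y x)) w = pz M X (fst w) * pz M Y (snd w)"
    then have eq: "\<forall>w. pj w = r w" unfolding pj_def r_def px_def py_def .
    have "\<forall>w. f w = 0"
    proof
      fix w show "f w = 0"
        using eq[rule_format, of w] by (cases "pj w = 0") (auto simp: f_def')
    qed
    then have "f = (\<lambda>_. 0)" by (intro ext) (metis prod.collapse)
    then show "mutual_information (exp 1) (count_space UNIV) (count_space UNIV) X Y = 0"
      using MI by simp
  qed
qed

end


lemma restr_meas[measurable]: "restr v \<in> borel \<rightarrow>\<^sub>M borel"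
  unfolding restr_def
proof (intro borel_measurable_continuous_onI continuous_on_vec_lambda)
  fix j show "continuous_on UNIV (\<lambda>x::real^'a. if j \<in> v then x $ j else 0)"
    by (cases "j \<in> v") (auto intro: continuous_intros)
qed

lemma expl_meas:
  assumes e: "e \<in> borel \<rightarrow>\<^sub>M count_space UNIV"
  shows "expl e \<in> borel \<rightarrow>\<^sub>M expl_space"
  unfolding expl_def expl_space_def
proof (rule measurable_Pair)
  show "e \<in> borel \<rightarrow>\<^sub>M count_space UNIV" by fact
  show "(\<lambda>x. restr (e x) x) \<in> borel \<rightarrow>\<^sub>M borel"
    by (rule measurable_compose_countable'[where f="\<lambda>i x. restr i x" and g=e and I=UNIV]) (auto simp: e intro: countable_finite)
qed

lemma snd_meas_q:
  assumes "sets q = sets joint_space"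
  shows "snd \<in> q \<rightarrow>\<^sub>M borel"
proof -
  have "snd \<in> joint_space \<rightarrow>\<^sub>M borel" unfolding joint_space_def by simp
  then show ?thesis unfolding measurable_cong_sets[OF assms refl] .
qed

lemma expl_law_prob:
  assumes "prob_space q" "sets q = sets joint_space" "e \<in> borel \<rightarrow>\<^sub>M count_space UNIV"
  shows "prob_space (expl_law q e)"
  unfolding expl_law_def
  by (rule prob_space.prob_space_distr[OF assms(1)])
     (rule measurable_compose[OF snd_meas_q[OF assms(2)] expl_meas[OF assms(3)]])

lemma K_props:
  assumes "is_rcd q K"
  shows "prob_space (K v a)" "sets (K v a) = sets joint_space" "space (K v a) = UNIV"
proof -
  have "K v \<in> borel \<rightarrow>\<^sub>M prob_algebra joint_space" using assms unfolding is_rcd_def by blast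
  from measurable_space[OF this, of a] show "prob_space (K v a)" "sets (K v a) = sets joint_space"
    by (auto simp: space_prob_algebra)
  then show "space (K v a) = UNIV"
    using sets_eq_imp_space_eq[of "K v a" joint_space] by (simp add: joint_space_def space_pair_measure)
qed

lemma E_meas:
  assumes e: "e \<in> borel \<rightarrow>\<^sub>M count_space UNIV" and s: "sets P = sets joint_space"
  shows "E_ind e v \<in> P \<rightarrow>\<^sub>M count_space UNIV"
proof -
  have "(\<lambda>z. e (snd z)) \<in> joint_space \<rightarrow>\<^sub>M count_space UNIV"
    unfolding joint_space_def by (rule measurable_compose[OF measurable_snd e])
  then have "(\<lambda>z. e (snd z) = v) \<in> joint_space \<rightarrow>\<^sub>M count_space UNIV"
    by (rule measurable_compose) simp
  then show ?thesis unfolding measurable_cong_sets[OF s refl] E_ind_def[abs_def] .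
qed

lemma fst_meas:
  assumes s: "sets P = sets joint_space"
  shows "(fst :: 'y::countable \<times> (real^'d) \<Rightarrow> 'y) \<in> P \<rightarrow>\<^sub>M count_space UNIV"
proof -
  have "(fst :: 'y \<times> (real^'d) \<Rightarrow> 'y) \<in> joint_space \<rightarrow>\<^sub>M count_space UNIV"
    unfolding joint_space_def by simp
  then show ?thesis unfolding measurable_cong_sets[OF s refl] .
qed

lemma cmi_facts:
  fixes K :: "'d set \<Rightarrow> real^'d \<Rightarrow> ('y::countable \<times> (real^'d)) measure"
  assumes K: "is_rcd q K" and e: "e \<in> borel \<rightarrow>\<^sub>M count_space UNIV"
  shows "0 \<le> inst_cmi K e v a" "inst_cmi K e v a \<le> 2"
    "inst_cmi K e v a = 0 \<longleftrightarrow> prob_space.indep_var (K v a)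
        (count_space UNIV) (\<lambda>z. Inl (E_ind e v z) :: bool + 'y)
        (count_space UNIV) (\<lambda>z. Inr (fst z) :: bool + 'y)"
    "inst_cmi K e v a = (\<integral>w. mif (K v a) (E_ind e v) fst w \<partial>count_space UNIV)"
proof -
  interpret P: prob_space "K v a" by (rule K_props[OF K])
  have X: "E_ind e v \<in> K v a \<rightarrow>\<^sub>M count_space UNIV" by (rule E_meas[OF e K_props(2)[OF K]])
  have Y: "(fst :: 'y \<times> (real^'d) \<Rightarrow> 'y) \<in> K v a \<rightarrow>\<^sub>M count_space UNIV" by (rule fst_meas[OF K_props(2)[OF K]])
  note MI = P.MI_props[OF X Y]
  show "0 \<le> inst_cmi K e v a" using MI(2) unfolding inst_cmi_def .
  show "inst_cmi K e v a \<le> 2" using MI(3) unfolding inst_cmi_def by simp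
  show "inst_cmi K e v a = (\<integral>w. mif (K v a) (E_ind e v) fst w \<partial>count_space UNIV)"
    using MI(1) unfolding inst_cmi_def .
  show "inst_cmi K e v a = 0 \<longleftrightarrow> prob_space.indep_var (K v a)
        (count_space UNIV) (\<lambda>z. Inl (E_ind e v z) :: bool + 'y)
        (count_space UNIV) (\<lambda>z. Inr (fst z) :: bool + 'y)"
    unfolding inst_cmi_def MI(4) P.indep_inj_iff[OF X Y] ..
qed


lemma pz_univ: "space P = UNIV \<Longrightarrow> pz P Z z = measure P {x. Z x = z}"
  unfolding pz_def by simp

lemma set_pre_meas:
  fixes Z :: "'a \<Rightarrow> 'z"
  assumes "Z \<in> N \<rightarrow>\<^sub>M count_space UNIV" "space N = UNIV"
  shows "{x. Z x = z} \<in> sets N"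
proof -
  have "Z -` {z} \<inter> space N \<in> sets N" by (rule measurable_sets[OF assms(1)]) simp
  then show ?thesis using assms(2) by (simp add: vimage_def)
qed

lemma cmi_meas_v:
  fixes K :: "'d set \<Rightarrow> real^'d \<Rightarrow> ('y::countable \<times> (real^'d)) measure"
  assumes K: "is_rcd q K" and e: "e \<in> borel \<rightarrow>\<^sub>M count_space UNIV"
  shows "(\<lambda>a. inst_cmi K e v a) \<in> borel_measurable borel"
proof -
  have Kv: "K v \<in> borel \<rightarrow>\<^sub>M prob_algebra joint_space" using K unfolding is_rcd_def by blast
  have mA: "(\<lambda>a. measure (K v a) A) \<in> borel_measurable borel" if "A \<in> sets joint_space" for A
    by (rule measurable_compose[OF Kv measurable_measure_prob_algebra[OF that]])
  have sp: "space (joint_space :: ('y \<times> (real^'d)) measure) = UNIV"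
    by (simp add: joint_space_def space_pair_measure)
  have X: "E_ind e v \<in> (joint_space :: ('y \<times> (real^'d)) measure) \<rightarrow>\<^sub>M count_space UNIV"
    by (rule E_meas[OF e refl])
  have Y: "(fst :: 'y \<times> (real^'d) \<Rightarrow> 'y) \<in> joint_space \<rightarrow>\<^sub>M count_space UNIV"
    by (rule fst_meas[OF refl])
  have XY: "(\<lambda>x. (E_ind e v x, fst x)) \<in> (joint_space :: ('y \<times> (real^'d)) measure) \<rightarrow>\<^sub>M count_space UNIV"
  proof -
    have "(\<lambda>x. (E_ind e v x, fst x)) \<in> (joint_space :: ('y \<times> (real^'d)) measure) \<rightarrow>\<^sub>M count_space UNIV \<Otimes>\<^sub>M count_space UNIV"
      using X Y by (rule measurable_Pair)
    then show ?thesis by (simp only: count_pair_UNIV)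
  qed
  define G where "G = (\<lambda>a w.
     measure (K v a) {x. (E_ind e v x, fst x) = w} *
     ln (measure (K v a) {x. (E_ind e v x, fst x) = w} /
        (measure (K v a) {x. E_ind e v x = fst w} * measure (K v a) {x. fst x = snd w})))"
  have Gm: "(\<lambda>a. G a w) \<in> borel_measurable borel" for w
  proof -
    have m1: "(\<lambda>a. measure (K v a) {x. (E_ind e v x, fst x) = w}) \<in> borel_measurable borel"
      by (rule mA, rule set_pre_meas[OF XY sp])
    have m2: "(\<lambda>a. measure (K v a) {x. E_ind e v x = fst w}) \<in> borel_measurable borel"
      by (rule mA, rule set_pre_meas[OF X sp])
    have m3: "(\<lambda>a. measure (K v a) {x. fst x = snd w}) \<in> borel_measurable borel"
      by (rule mA, rule set_pre_meas[OF Y sp])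
    show ?thesis unfolding G_def using m1 m2 m3 by (intro borel_measurable_times borel_measurable_ln borel_measurable_divide)
  qed
  have Gc: "(\<lambda>p. G (fst p) (snd p)) \<in> borel_measurable (borel \<Otimes>\<^sub>M count_space UNIV)"
  proof (rule measurable_compose_countable'[where f="\<lambda>w p. G (fst p) w" and g=snd and I=UNIV])
    fix w show "(\<lambda>p. G (fst p) w) \<in> borel_measurable (borel \<Otimes>\<^sub>M count_space UNIV)"
      by (rule measurable_compose[OF measurable_fst Gm])
  qed auto
  interpret C: sigma_finite_measure "count_space (UNIV :: (bool \<times> 'y) set)"
    by (rule sigma_finite_measure_count_space_countable) simp
  have "(\<lambda>a. \<integral>w. G a w \<partial>count_space UNIV) \<in> borel_measurable borel"
    by (rule C.borel_measurable_lebesgue_integral) (rule back_subst[of "\<lambda>h. h \<in> borel_measurable _", OF Gc], simp add: fun_eq_iff)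
  moreover have "inst_cmi K e v a = (\<integral>w. G a w \<partial>count_space UNIV)" for a
    unfolding cmi_facts(4)[OF K e] G_def mif_def pz_univ[OF K_props(3)[OF K]] by (rule refl)
  ultimately show ?thesis by simp
qed

lemma cmi_meas:
  fixes K :: "'d set \<Rightarrow> real^'d \<Rightarrow> ('y::countable \<times> (real^'d)) measure"
  assumes K: "is_rcd q K" and e: "e \<in> borel \<rightarrow>\<^sub>M count_space UNIV"
  shows "(\<lambda>p. inst_cmi K e (fst p) (snd p)) \<in> borel_measurable expl_space"
  unfolding expl_space_def
proof (rule measurable_pair_measure_countable1)
  show "countable (UNIV :: 'd set set)" by (rule countable_finite) simp
  fix v :: "'d set" 
  show "(\<lambda>a. inst_cmi K e (fst (v, a)) (snd (v, a))) \<in> borel_measurable borel"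
    unfolding fst_conv snd_conv by (rule cmi_meas_v[OF K e])
qed


lemma phi_meas_law:
  fixes K :: "'d set \<Rightarrow> real^'d \<Rightarrow> ('y::countable \<times> (real^'d)) measure"
  assumes K: "is_rcd q K" and e: "e \<in> borel \<rightarrow>\<^sub>M count_space UNIV"
  shows "(\<lambda>p. inst_cmi K e (fst p) (snd p)) \<in> borel_measurable (expl_law q e)"
proof -
  have "sets (expl_law q e) = sets expl_space" unfolding expl_law_def by simp
  show ?thesis unfolding measurable_cong_sets[OF \<open>sets (expl_law q e) = sets expl_space\<close> refl]
    by (rule cmi_meas[OF K e])
qed

lemma phi_zero:
  fixes K :: "'d set \<Rightarrow> real^'d \<Rightarrow> ('y::countable \<times> (real^'d)) measure"
  assumes q: "prob_space q" "sets q = sets joint_space"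
    and K: "is_rcd q K" and e: "e \<in> borel \<rightarrow>\<^sub>M count_space UNIV"
    and ne: "\<not> encoding q K e"
  shows "encode_meter q K e = 0"
proof -
  interpret L: prob_space "expl_law q e" by (rule expl_law_prob[OF q e])
  define f where "f = (\<lambda>p. inst_cmi K e (fst p) (snd p))"
  have fm[measurable]: "f \<in> borel_measurable expl_space" unfolding f_def by (rule cmi_meas[OF K e])
  define D where "D = {p \<in> space expl_space. f p \<noteq> 0}"
  have D: "D \<in> sets expl_space" unfolding D_def by measurable
  have Dn: "\<forall>(v,a)\<in>D. \<not> prob_space.indep_var (K v a)
        (count_space UNIV) (\<lambda>z. Inl (E_ind e v z) :: bool + 'y)
        (count_space UNIV) (\<lambda>z. Inr (fst z) :: bool + 'y)"
    unfolding D_def f_def using cmi_facts(3)[OF K e] by auto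
  have "\<not> measure (expl_law q e) D > 0"
    using ne D Dn unfolding encoding_def by blast
  then have "measure (expl_law q e) D = 0" using measure_nonneg[of "expl_law q e" D] by linarith
  moreover have Ds: "D \<in> sets (expl_law q e)" using D unfolding expl_law_def by simp
  ultimately have "D \<in> null_sets (expl_law q e)"
    by (simp add: L.emeasure_eq_measure null_sets_def)
  then have "AE p in expl_law q e. p \<notin> D" using AE_iff_null_sets[OF Ds] by simp
  then have "AE p in expl_law q e. f p = 0"
  proof (rule AE_mp[OF _ AE_I2])
    fix p assume "p \<in> space (expl_law q e)"
    then have "p \<in> space expl_space" unfolding expl_law_def by simp
    then show "p \<notin> D \<longrightarrow> f p = 0" unfolding D_def by auto
  qed
  then show ?thesis unfolding encode_meter_def f_def by (rule integral_eq_zero_AE)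
qed

lemma phi_pos:
  fixes K :: "'d set \<Rightarrow> real^'d \<Rightarrow> ('y::countable \<times> (real^'d)) measure"
  assumes q: "prob_space q" "sets q = sets joint_space"
    and K: "is_rcd q K" and e: "e \<in> borel \<rightarrow>\<^sub>M count_space UNIV"
    and en: "encoding q K e"
  shows "encode_meter q K e > 0"
proof -
  interpret L: prob_space "expl_law q e" by (rule expl_law_prob[OF q e])
  define f where "f = (\<lambda>p. inst_cmi K e (fst p) (snd p))"
  have fm: "f \<in> borel_measurable (expl_law q e)" unfolding f_def by (rule phi_meas_law[OF K e])
  have nn: "0 \<le> f p" for p unfolding f_def using cmi_facts(1)[OF K e] by simp
  have int: "integrable (expl_law q e) f"
  proof (rule L.integrable_const_bound[where B=2])
    show "AE x in expl_law q e. norm (f x) \<le> 2"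
      unfolding f_def using cmi_facts(1,2)[OF K e] by auto
  qed (rule fm)
  obtain S where S: "S \<in> sets expl_space" "measure (expl_law q e) S > 0"
    and Sn: "\<forall>(v,a)\<in>S. \<not> prob_space.indep_var (K v a)
        (count_space UNIV) (\<lambda>z. Inl (E_ind e v z) :: bool + 'y)
        (count_space UNIV) (\<lambda>z. Inr (fst z) :: bool + 'y)"
    using en unfolding encoding_def by blast
  have Sf: "p \<in> S \<Longrightarrow> f p \<noteq> 0" for p
    using Sn cmi_facts(3)[OF K e] unfolding f_def by (cases p) auto
  have Ss: "S \<in> sets (expl_law q e)" using S(1) unfolding expl_law_def by simp
  have "encode_meter q K e \<noteq> 0"
  proof
    assume "encode_meter q K e = 0"
    then have "integral\<^sup>L (expl_law q e) f = 0" unfolding encode_meter_def f_def .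
    then have "AE p in expl_law q e. f p = 0"
      using integral_nonneg_eq_0_iff_AE[OF int] nn by simp
    then have "AE p in expl_law q e. p \<notin> S"
      by (rule AE_mp) (auto intro!: AE_I2 dest: Sf)
    then have "S \<in> null_sets (expl_law q e)" using AE_iff_null_sets[OF Ss] by simp
    then have "measure (expl_law q e) S = 0" by (simp add: L.emeasure_eq_measure null_sets_def)
    then show False using S(2) by simp
  qed
  moreover have "encode_meter q K e \<ge> 0"
    unfolding encode_meter_def using cmi_facts(1)[OF K e] by (intro integral_nonneg_AE) auto
  ultimately show ?thesis by simp
qed

theorem theorem2:
  fixes q :: "('y::countable \<times> (real^'d)) measure"
    and K :: "'d set \<Rightarrow> real^'d \<Rightarrow> ('y \<times> (real^'d)) measure"
    and e e' :: "real^'d \<Rightarrow> 'd set"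
  assumes "prob_space q"
    and "sets q = sets joint_space"
    and "is_rcd q K"
    and "finite_H_y_given_x q K"
    and "finite_H_y q"
    and "e \<in> borel \<rightarrow>\<^sub>M count_space UNIV"
    and "e' \<in> borel \<rightarrow>\<^sub>M count_space UNIV"
    and "encoding q K e"
    and "\<not> encoding q K e'"
  shows "\<exists>\<alpha>0. \<forall>\<alpha>>\<alpha>0. STRIPE_X \<alpha> q K e' > STRIPE_X \<alpha> q K e"
proof -
  have z: "encode_meter q K e' = 0" by (rule phi_zero[OF assms(1,2,3,7,9)])
  have p: "encode_meter q K e > 0" by (rule phi_pos[OF assms(1,2,3,6,8)])
  define c where "c = encode_meter q K e"
  show ?thesis
  proof (intro exI allI impI)
    fix \<alpha> assume a: "\<alpha> > (EVAL_X q K e - EVAL_X q K e') / c"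
    then have "\<alpha> * c > EVAL_X q K e - EVAL_X q K e'"
      using p unfolding c_def by (simp add: pos_divide_less_eq)
    then show "STRIPE_X \<alpha> q K e' > STRIPE_X \<alpha> q K e"
      unfolding STRIPE_X_def z c_def[symmetric] by simp
  qed
qed


end
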